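(* Let $N=\{1,\ldots,n\}$, let $(L^+,\le)$ be a totally ordered set with bottom $\mathbb{O}$ and top $\mathbb{1}$ equipped with a conjugation $a\mapsto\overline{a}$, let $\Pi:2^N\to L^+$ be a possibility measure and $\mathrm{N}$ its conjugate necessity measure, $\mathrm{N}(A)=\overline{\Pi(N\setminus A)}$, and suppose the elements of $N$ are labeled so that $\Pi(\{1\})\le\cdots\le\Pi(\{n\})$. Then: (i) $m^\Pi(A)=\Pi(\{i\})$ if $A=\{i\}$ for some $i\in N$, and $m^\Pi(A)=\mathbb{O}$ otherwise; (ii) if $\mathbb{O}<\Pi(\{1\})<\cdots<\Pi(\{n\})=\mathbb{1}$, then $m^{\mathrm{N}}(N)=\mathbb{1}$, $m^{\mathrm{N}}(\{i+1,\ldots,n\})=\overline{\Pi(\{i\})}$ for $i\in N$, and $m^{\mathrm{N}}(A)=\mathbb{O}$ for every other $A\subseteq N$; (iii) if $\Pi(\{i\})=\Pi(\{i+1\})$ for some $i$, then $m^{\mathrm{N}}(\{i+1,\ldots,n\})=\mathbb{O}$.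
   Context: A conjugation on $L^+$ is a bijective order-reversing map $a\mapsto\overline{a}$ with $\overline{\overline{a}}=a$. A capacity is an isotone map $v:(2^N,\subseteq)\to L^+$ with $v(\emptyset)=\mathbb{O}$, $v(N)=\mathbb{1}$. A possibility measure is a capacity $\Pi$ with $\Pi(A\cup B)=\Pi(A)\vee\Pi(B)$ for all $A,B\subseteq N$. For a capacity $v$, its (ordinal) Möbius transform is $m^v(A)=v(A)$ if $v(A)>v(A\setminus\{k\})$ for all $k\in A$, and $m^v(A)=\mathbb{O}$ otherwise (in particular $m^v(\emptyset)=\mathbb{O}$). *)

theory Defs
  imports Main
begin

text \<open>The totally ordered set L+ with bottom and top is a type of class linorder with
  bot and top; \<open>bot\<close> plays the role of O and \<open>top\<close> of 1.\<close>

definition conjugation :: "('a::linorder \<Rightarrow> 'a) \<Rightarrow> bool" where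
  "conjugation c \<longleftrightarrow> bij c \<and> (\<forall>a b. a \<le> b \<longrightarrow> c b \<le> c a) \<and> (\<forall>a. c (c a) = a)"

definition capacity :: "nat set \<Rightarrow> (nat set \<Rightarrow> 'a::{linorder,order_bot,order_top}) \<Rightarrow> bool" where
  "capacity N v \<longleftrightarrow> v {} = bot \<and> v N = top \<and>
     (\<forall>A B. A \<subseteq> B \<and> B \<subseteq> N \<longrightarrow> v A \<le> v B)"

definition possibility_measure :: "nat set \<Rightarrow> (nat set \<Rightarrow> 'a::{linorder,order_bot,order_top}) \<Rightarrow> bool" where
  "possibility_measure N P \<longleftrightarrow> capacity N P \<and>
     (\<forall>A B. A \<subseteq> N \<and> B \<subseteq> N \<longrightarrow> P (A \<union> B) = max (P A) (P B))"

text \<open>Ordinal Moebius transform (for A = {} the condition is vacuous and v {} = bot).\<close>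
definition mobius :: "(nat set \<Rightarrow> 'a::{linorder,order_bot}) \<Rightarrow> nat set \<Rightarrow> 'a" where
  "mobius v A = (if \<forall>k\<in>A. v (A - {k}) < v A then v A else bot)"

end

theory Submission
  imports Defs
begin

lemma pm_mono:
  assumes "possibility_measure N P" "A \<subseteq> B" "B \<subseteq> N"
  shows "P A \<le> P B"
  using assms unfolding possibility_measure_def capacity_def by blast

lemma pm_bot: "possibility_measure N P \<Longrightarrow> P {} = bot"
  unfolding possibility_measure_def capacity_def by blast

lemma pm_top: "possibility_measure N P \<Longrightarrow> P N = top"
  unfolding possibility_measure_def capacity_def by blast

lemma pm_un:
  assumes "possibility_measure N P" "A \<subseteq> N" "B \<subseteq> N"
  shows "P (A \<union> B) = max (P A) (P B)"
  using assms unfolding possibility_measure_def by blast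

lemma pm_single:
  assumes pm: "possibility_measure N P" and "finite A" "A \<noteq> {}" "A \<subseteq> N"
  shows "\<exists>j\<in>A. P A = P {j}"
  using assms(2,3,4)
proof (induction A rule: finite_ne_induct)
  case (singleton x) then show ?case by auto
next
  case (insert x F)
  then obtain j where j: "j \<in> F" "P F = P {j}" by auto
  have "P (insert x F) = max (P {x}) (P F)"
    using pm_un[OF pm, of "{x}" F] insert.prems by auto
  then show ?case using j by (auto simp: max_def)
qed

lemma pm_insert:
  assumes pm: "possibility_measure N P" "k \<in> N" "B \<subseteq> N"
  shows "P (insert k B) = max (P {k}) (P B)"
  using pm_un[OF assms(1), of "{k}" B] assms by auto

lemma conj_facts:
  fixes c :: "'a::{linorder,order_bot,order_top} \<Rightarrow> 'a"
  assumes "conjugation c"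
  shows "\<And>a b. c a < c b \<longleftrightarrow> b < a" "c bot = top" "c top = bot"
proof -
  have inv: "\<And>a. c (c a) = a" and anti: "\<And>a b. a \<le> b \<Longrightarrow> c b \<le> c a"
    using assms unfolding conjugation_def by auto
  have le: "\<And>a b. c a \<le> c b \<longleftrightarrow> b \<le> a"
    using anti inv by metis
  show "\<And>a b. c a < c b \<longleftrightarrow> b < a" using le by (metis not_le)
  show "c bot = top" using le by (metis bot_least inv top.extremum_unique)
  show "c top = bot" using le by (metis top_greatest inv bot.extremum_unique)
qed

theorem theorem3:
  fixes n :: nat
    and P :: "nat set \<Rightarrow> 'a::{linorder,order_bot,order_top}"
    and c :: "'a \<Rightarrow> 'a"
  assumes n: "n \<ge> 1"
    and conj: "conjugation c"
    and poss: "possibility_measure {1..n} P"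
    and labeled: "\<And>i j. 1 \<le> i \<Longrightarrow> i \<le> j \<Longrightarrow> j \<le> n \<Longrightarrow> P {i} \<le> P {j}"
  shows
    "((\<forall>i\<in>{1..n}. mobius P {i} = P {i}) \<and>
      (\<forall>A. A \<subseteq> {1..n} \<and> \<not> (\<exists>i\<in>{1..n}. A = {i}) \<longrightarrow> mobius P A = bot))
     \<and>
     ((bot < P {1} \<and> (\<forall>i. 1 \<le> i \<and> i < n \<longrightarrow> P {i} < P {i+1}) \<and> P {n} = top) \<longrightarrow>
        (mobius (\<lambda>A. c (P ({1..n} - A))) {1..n} = top \<and>
         (\<forall>i\<in>{1..n}. mobius (\<lambda>A. c (P ({1..n} - A))) {i+1..n} = c (P {i})) \<and>
         (\<forall>A. A \<subseteq> {1..n} \<and> A \<noteq> {1..n} \<and> (\<forall>i\<in>{1..n}. A \<noteq> {i+1..n}) \<longrightarrow>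
              mobius (\<lambda>A. c (P ({1..n} - A))) A = bot)))
     \<and>
     (\<forall>i. 1 \<le> i \<and> i < n \<and> P {i} = P {i+1} \<longrightarrow>
        mobius (\<lambda>A. c (P ({1..n} - A))) {i+1..n} = bot)"
proof -
  define Nn where "Nn = {1..n}"
  note cf = conj_facts[OF conj]
  have Pe: "P {} = bot" using pm_bot[OF poss] .
  have interval: "P {1..m} = P {m}" if "1 \<le> m" "m \<le> n" for m
  proof -
    have ne: "{1..m} \<noteq> {}" using that by simp
    have sub: "{1..m} \<subseteq> {1..n}" using that by auto
    obtain j where j: "j \<in> {1..m}" "P {1..m} = P {j}"
      using pm_single[OF poss finite_atLeastAtMost ne sub] by blast
    have "P {j} \<le> P {m}" using labeled[of j m] j that by auto
    moreover have "P {m} \<le> P {1..m}" using pm_mono[OF poss, of "{m}" "{1..m}"] that by auto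
    ultimately show ?thesis using j by auto
  qed
  have part1: "(\<forall>i\<in>{1..n}. mobius P {i} = P {i}) \<and>
      (\<forall>A. A \<subseteq> {1..n} \<and> \<not> (\<exists>i\<in>{1..n}. A = {i}) \<longrightarrow> mobius P A = bot)"
  proof (intro conjI ballI allI impI)
    fix i assume "i \<in> {1..n}"
    show "mobius P {i} = P {i}"
    proof (cases "bot < P {i}")
      case True then show ?thesis by (simp add: mobius_def Pe)
    next
      case False then have "P {i} = bot" using bot.not_eq_extremum by blast
      then show ?thesis by (simp add: mobius_def)
    qed
  next
    fix A assume A: "A \<subseteq> {1..n} \<and> \<not> (\<exists>i\<in>{1..n}. A = {i})"
    show "mobius P A = bot"
    proof (cases "A = {}")
      case True then show ?thesis by (simp add: mobius_def Pe)
    next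
      case False
      have fin: "finite A" using A finite_subset by blast
      obtain j where j: "j \<in> A" "P A = P {j}" using pm_single[OF poss fin False] A by auto
      obtain k where k: "k \<in> A" "k \<noteq> j" using A j by blast
      have "P {j} \<le> P (A - {k})" using pm_mono[OF poss, of "{j}" "A - {k}"] A j k by auto
      then have "\<not> P (A - {k}) < P A" using j by auto
      then show ?thesis using k unfolding mobius_def by auto
    qed
  qed
  have part2: "(bot < P {1} \<and> (\<forall>i. 1 \<le> i \<and> i < n \<longrightarrow> P {i} < P {i+1}) \<and> P {n} = top) \<longrightarrow>
        (mobius (\<lambda>A. c (P ({1..n} - A))) {1..n} = top \<and>
         (\<forall>i\<in>{1..n}. mobius (\<lambda>A. c (P ({1..n} - A))) {i+1..n} = c (P {i})) \<and>
         (\<forall>A. A \<subseteq> {1..n} \<and> A \<noteq> {1..n} \<and> (\<forall>i\<in>{1..n}. A \<noteq> {i+1..n}) \<longrightarrow>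
              mobius (\<lambda>A. c (P ({1..n} - A))) A = bot))"
  proof (intro impI)
    assume H: "bot < P {1} \<and> (\<forall>i. 1 \<le> i \<and> i < n \<longrightarrow> P {i} < P {i+1}) \<and> P {n} = top"
    have pos: "bot < P {k}" if "k \<in> {1..n}" for k
      using H labeled[of 1 k] that by (auto intro: less_le_trans)
    have strict0: "1 \<le> i \<Longrightarrow> i + d + 1 \<le> n \<Longrightarrow> P {i} < P {i + d + 1}" for i d
    proof (induction d)
      case 0 then show ?case using H by auto
    next
      case (Suc d)
      then have "P {i} < P {i + d + 1}" by auto
      also have "P {i + d + 1} < P {i + Suc d + 1}" using H Suc.prems by auto
      finally show ?case .
    qed
    have strict: "P {i} < P {j}" if "1 \<le> i" "i < j" "j \<le> n" for i j
      using strict0[of i "j - i - 1"] that by auto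
    have Ptop: "P {1..n} = top" using pm_top[OF poss] .
    show "mobius (\<lambda>A. c (P ({1..n} - A))) {1..n} = top \<and>
         (\<forall>i\<in>{1..n}. mobius (\<lambda>A. c (P ({1..n} - A))) {i+1..n} = c (P {i})) \<and>
         (\<forall>A. A \<subseteq> {1..n} \<and> A \<noteq> {1..n} \<and> (\<forall>i\<in>{1..n}. A \<noteq> {i+1..n}) \<longrightarrow>
              mobius (\<lambda>A. c (P ({1..n} - A))) A = bot)"
    proof (intro conjI ballI allI impI)
      have "\<forall>k\<in>{1..n}. c (P ({1..n} - ({1..n} - {k}))) < c (P ({1..n} - {1..n}))"
      proof
        fix k assume k: "k \<in> {1..n}"
        have "{1..n} - ({1..n} - {k}) = {k}" using k by auto
        then show "c (P ({1..n} - ({1..n} - {k}))) < c (P ({1..n} - {1..n}))"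
          using pos[OF k] cf(1) Pe by simp
      qed
      then show "mobius (\<lambda>A. c (P ({1..n} - A))) {1..n} = top"
        unfolding mobius_def using Pe cf(2) by simp
    next
      fix i assume i: "i \<in> {1..n}"
      show "mobius (\<lambda>A. c (P ({1..n} - A))) {i+1..n} = c (P {i})"
      proof (cases "i = n")
        case True
        then show ?thesis using H Ptop cf(3) by (simp add: mobius_def)
      next
        case False
        have d: "{1..n} - {i+1..n} = {1..i}" using i False by auto
        have NA: "P {1..i} = P {i}" using interval i by auto
        have "\<forall>k\<in>{i+1..n}. c (P ({1..n} - ({i+1..n} - {k}))) < c (P ({1..n} - {i+1..n}))"
        proof
          fix k assume k: "k \<in> {i+1..n}"
          have e: "{1..n} - ({i+1..n} - {k}) = insert k {1..i}" using k i by auto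
          have "P (insert k {1..i}) = max (P {k}) (P {1..i})"
            using pm_insert[OF poss, of k "{1..i}"] k i by auto
          also have "\<dots> = P {k}" using NA strict[of i k] i k by (auto simp: max_def)
          finally show "c (P ({1..n} - ({i+1..n} - {k}))) < c (P ({1..n} - {i+1..n}))"
            using e d NA strict[of i k] i k cf(1) by auto
        qed
        then show ?thesis unfolding mobius_def using d NA by simp
      qed
    next
      fix A assume A: "A \<subseteq> {1..n} \<and> A \<noteq> {1..n} \<and> (\<forall>i\<in>{1..n}. A \<noteq> {i+1..n})"
      have ne: "A \<noteq> {}" using A n by (metis atLeastAtMost_iff atLeastatMost_empty
            le_refl less_add_one)
      have "\<exists>k\<in>A. \<exists>j\<in>{1..n} - A. k < j"
      proof (rule ccontr)
        assume nc: "\<not> ?thesis"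
        have fin: "finite A" using A finite_subset by blast
        define m where "m = Min A"
        have mA: "m \<in> A" using Min_in[OF fin ne] m_def by auto
        have "A = {m..n}"
        proof
          show "A \<subseteq> {m..n}" using A fin m_def by auto
          show "{m..n} \<subseteq> A"
          proof
            fix x assume x: "x \<in> {m..n}"
            show "x \<in> A"
            proof (rule ccontr)
              assume "x \<notin> A"
              then have "m < x" using x mA by (cases "m = x") auto
              have xin: "x \<in> {1..n}" using x mA A by auto
              have xd: "x \<in> {1..n} - A" using xin \<open>x \<notin> A\<close> by simp
              have "\<exists>k\<in>A. \<exists>j\<in>{1..n} - A. k < j" using mA xd \<open>m < x\<close> by blast
              then show False using nc by blast
            qed
          qed
        qed
        moreover have "m \<ge> 1" "m \<le> n" using mA A by auto
        ultimately show False
        proof (cases "m = 1")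
          case True then show False using A \<open>A = {m..n}\<close> by simp
        next
          case False
          then have "m - 1 \<in> {1..n}" "m - 1 + 1 = m" using \<open>m \<ge> 1\<close> \<open>m \<le> n\<close> by auto
          then show False using A \<open>A = {m..n}\<close> by metis
        qed
      qed
      then obtain k j where kj: "k \<in> A" "j \<in> {1..n} - A" "k < j" by blast
      have kN: "k \<in> {1..n}" using A kj by auto
      have e: "{1..n} - (A - {k}) = insert k ({1..n} - A)" using kN kj by auto
      have "P {k} \<le> P {j}" using labeled[of k j] kj kN by auto
      also have "P {j} \<le> P ({1..n} - A)" using pm_mono[OF poss, of "{j}" "{1..n} - A"] kj by auto
      finally have "P (insert k ({1..n} - A)) = P ({1..n} - A)"
        using pm_insert[OF poss, of k "{1..n} - A"] kN by (auto simp: max_def)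
      then have "\<not> c (P ({1..n} - (A - {k}))) < c (P ({1..n} - A))" using e by simp
      then show "mobius (\<lambda>A. c (P ({1..n} - A))) A = bot"
        unfolding mobius_def using kj by auto
    qed
  qed
  have part3: "\<forall>i. 1 \<le> i \<and> i < n \<and> P {i} = P {i+1} \<longrightarrow>
        mobius (\<lambda>A. c (P ({1..n} - A))) {i+1..n} = bot"
  proof (intro allI impI)
    fix i assume i: "1 \<le> i \<and> i < n \<and> P {i} = P {i+1}"
    have e1: "{1..n} - ({i+1..n} - {i+1}) = {1..i+1}" using i by auto
    have e2: "{1..n} - {i+1..n} = {1..i}" using i by auto
    have "P {1..i+1} = P {1..i}" using interval[of "i+1"] interval[of i] i by auto
    then have "\<not> c (P ({1..n} - ({i+1..n} - {i+1}))) < c (P ({1..n} - {i+1..n}))"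
      using e1 e2 by simp
    moreover have mem: "i + 1 \<in> {i+1..n}" using i by auto
    ultimately have "\<not> (\<forall>k\<in>{i+1..n}. c (P ({1..n} - ({i+1..n} - {k}))) < c (P ({1..n} - {i+1..n})))"
      using bspec[OF _ mem] by fast
    then show "mobius (\<lambda>A. c (P ({1..n} - A))) {i+1..n} = bot"
      unfolding mobius_def by (rule if_not_P)
  qed
  show ?thesis by (rule conjI[OF part1 conjI[OF part2 part3]])
qed

end
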